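(* Let $q_1,\dots,q_8$ be the eight points $(\pm1,\pm1,\pm1)$ of $\mathbb{R}^3$, let $t\in(0,1)$ and $q_{j+8}=tq_j$ ($j=1,\dots,8$), so that these are the vertices of two nested cubes with ratio of edges $t$. Place mass $\mu_1$ at each of $q_1,\dots,q_8$ and mass $\mu_2\neq0$ at each of $q_9,\dots,q_{16}$. Then the configuration is a central configuration if and only if $$\frac{\mu_1}{\mu_2}=-\frac{24c(t)-\frac{\sqrt3t+\sqrt3}{3(t+1)^3}-\frac{3(t+3)}{(3t^2+2t+3)^{3/2}}+\frac{3(t-3)}{(3t^2-2t+3)^{3/2}}-\frac{\sqrt3t-\sqrt3}{3(t-1)^3}}{24c(t)-\frac{\sqrt3}{12}-\frac{3\sqrt2}{8}-\frac34},$$ where $c(t)=-\gamma_0(t)/\gamma_1(t)$ with $$\gamma_1(t)=-\left((2\sqrt3+9\sqrt2+18)t-\frac{72(t^2+6t+1)}{(3t^2+2t+3)^{3/2}}+\frac{72(t^2-6t+1)}{(3t^2-2t+3)^{3/2}}-\frac{8\sqrt3}{t+1}-\frac{8\sqrt3}{t-1}+\frac{2\sqrt3+9\sqrt2+18}{t^2}\right),$$ $$\begin{aligned}\gamma_0(t)=&-\frac{9(3t+1)(t+3)}{(3t^2+2t+3)^3}+\frac{9(3t-1)(t-3)}{(3t^2-2t+3)^3}+\frac{6\sqrt3\sqrt2+12\sqrt3+54\sqrt2+83}{96t^2}\\&-\frac{4\sqrt3}{(3t^2+2t+3)^{3/2}(t+1)}-\frac{2\sqrt3}{(3t^2-2t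+3)^{3/2}(t+1)}-\frac{2\sqrt3}{(3t^2+2t+3)^{3/2}(t-1)}-\frac{4\sqrt3}{(3t^2-2t+3)^{3/2}(t-1)}\\&-\frac{144t}{(3t^2+2t+3)^{3/2}(3t^2-2t+3)^{3/2}}-\frac{1}{3(t+1)^4}+\frac{1}{3(t-1)^4}.\end{aligned}$$
   Context: A configuration $q=(q_1,\dots,q_N)$ of distinct points in $\mathbb{R}^3$ with masses $m_1,\dots,m_N$ is a central configuration if there exists $c\in\mathbb{R}$ such that $\sum_{j\neq i} m_j\left(\frac{1}{|q_j-q_i|^3}-c\right)(q_j-q_i)=0$ for all $i=1,\dots,N$. *)

theory Defs
  imports "HOL-Analysis.Analysis"
begin

definition central_configuration :: "nat \<Rightarrow> (nat \<Rightarrow> real^3) \<Rightarrow> (nat \<Rightarrow> real) \<Rightarrow> bool" where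
  "central_configuration N q m \<longleftrightarrow>
     (\<forall>i<N. \<forall>j<N. i \<noteq> j \<longrightarrow> q i \<noteq> q j) \<and>
     (\<exists>c::real. \<forall>i<N.
        (\<Sum>j\<in>{j. j < N \<and> j \<noteq> i}. (m j * (1 / norm (q j - q i) ^ 3 - c)) *\<^sub>R (q j - q i)) = 0)"

definition cube_vertex :: "nat \<Rightarrow> real^3" where
  "cube_vertex k = vector [(-1) ^ (k mod 2), (-1) ^ ((k div 2) mod 2), (-1) ^ ((k div 4) mod 2)]"

text \<open>Two nested cubes: indices 0..7 are q_1..q_8, indices 8..15 are q_9..q_16 = t q_1..t q_8.\<close>
definition nested_cubes :: "real \<Rightarrow> nat \<Rightarrow> real^3" where
  "nested_cubes t j = (if j < 8 then cube_vertex j else t *\<^sub>R cube_vertex (j - 8))"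

definition nested_masses :: "real \<Rightarrow> real \<Rightarrow> nat \<Rightarrow> real" where
  "nested_masses \<mu>1 \<mu>2 j = (if j < 8 then \<mu>1 else \<mu>2)"

definition gamma1 :: "real \<Rightarrow> real" where
  "gamma1 t = - ((2 * sqrt 3 + 9 * sqrt 2 + 18) * t
      - 72 * (t^2 + 6*t + 1) / (3*t^2 + 2*t + 3) powr (3/2)
      + 72 * (t^2 - 6*t + 1) / (3*t^2 - 2*t + 3) powr (3/2)
      - 8 * sqrt 3 / (t + 1) - 8 * sqrt 3 / (t - 1)
      + (2 * sqrt 3 + 9 * sqrt 2 + 18) / t^2)"

definition gamma0 :: "real \<Rightarrow> real" where
  "gamma0 t =
      - 9 * (3*t + 1) * (t + 3) / (3*t^2 + 2*t + 3) ^ 3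
      + 9 * (3*t - 1) * (t - 3) / (3*t^2 - 2*t + 3) ^ 3
      + (6 * sqrt 3 * sqrt 2 + 12 * sqrt 3 + 54 * sqrt 2 + 83) / (96 * t^2)
      - 4 * sqrt 3 / ((3*t^2 + 2*t + 3) powr (3/2) * (t + 1))
      - 2 * sqrt 3 / ((3*t^2 - 2*t + 3) powr (3/2) * (t + 1))
      - 2 * sqrt 3 / ((3*t^2 + 2*t + 3) powr (3/2) * (t - 1))
      - 4 * sqrt 3 / ((3*t^2 - 2*t + 3) powr (3/2) * (t - 1))
      - 144 * t / ((3*t^2 + 2*t + 3) powr (3/2) * (3*t^2 - 2*t + 3) powr (3/2))
      - 1 / (3 * (t + 1) ^ 4) + 1 / (3 * (t - 1) ^ 4)"

definition cc :: "real \<Rightarrow> real" where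
  "cc t = - gamma0 t / gamma1 t"

definition mass_ratio :: "real \<Rightarrow> real" where
  "mass_ratio t = - (24 * cc t
        - (sqrt 3 * t + sqrt 3) / (3 * (t + 1) ^ 3)
        - 3 * (t + 3) / (3*t^2 + 2*t + 3) powr (3/2)
        + 3 * (t - 3) / (3*t^2 - 2*t + 3) powr (3/2)
        - (sqrt 3 * t - sqrt 3) / (3 * (t - 1) ^ 3))
      / (24 * cc t - sqrt 3 / 12 - 3 * sqrt 2 / 8 - 3 / 4)"

end

theory Submission
  imports Defs
begin
unbundle bit_operations_syntax

definition rflx :: "nat \<Rightarrow> real^3 \<Rightarrow> real^3" where
  "rflx k x = (\<chi> m. cube_vertex k $ m * x $ m)"

lemma lt8: "(k::nat) < 8 \<Longrightarrow> k = 0 \<or> k = 1 \<or> k = 2 \<or> k = 3 \<or> k = 4 \<or> k = 5 \<or> k = 6 \<or> k = 7"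
  by auto

lemma lt16: "(k::nat) < 16 \<Longrightarrow> k = 0 \<or> k = 1 \<or> k = 2 \<or> k = 3 \<or> k = 4 \<or> k = 5 \<or> k = 6 \<or> k = 7 \<or> k = 8 \<or> k = 9 \<or> k = 10 \<or> k = 11 \<or> k = 12 \<or> k = 13 \<or> k = 14 \<or> k = 15"
  by presburger

lemma cv_xor: assumes "j < 8" "k < 8"
  shows "cube_vertex (j XOR k) = rflx k (cube_vertex j)"
  using lt8[OF assms(1)] lt8[OF assms(2)]
  by (elim disjE) (simp_all add: rflx_def cube_vertex_def vec_eq_iff forall_3)

lemma xor_inv: fixes j k :: nat shows "(j XOR k) XOR k = j"
  by (simp add: xor.assoc)

lemma xor_all: fixes j k :: nat assumes "j < 16" "k < 8"
  shows "j XOR k < 16 \<and> (j XOR k < 8) = (j < 8) \<and>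
     (j \<ge> 8 \<longrightarrow> (j XOR k) - 8 = (j - 8) XOR k)"
  using lt16[OF assms(1)] lt8[OF assms(2)]
  by (elim disjE) simp_all

lemma xor_facts: fixes j k :: nat assumes "j < 16" "k < 8"
  shows "j XOR k < 16" "(j XOR k) XOR k = j" "(j XOR k < 8) = (j < 8)"
     "j \<ge> 8 \<Longrightarrow> (j XOR k) - 8 = (j - 8) XOR k"
  using xor_all[OF assms] xor_inv by auto

lemma rflx_scale: "rflx k (a *\<^sub>R x) = a *\<^sub>R rflx k x"
  by (simp add: rflx_def vec_eq_iff)

lemma nc_xor: assumes "j < 16" "k < 8"
  shows "nested_cubes t (j XOR k) = rflx k (nested_cubes t j)"
proof (cases "j < 8")
  case True
  then show ?thesis using xor_facts[OF assms] cv_xor[OF True assms(2)] by (simp add: nested_cubes_def)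
next
  case False
  then have "j - 8 < 8" using assms by simp
  then show ?thesis using False xor_facts[OF assms] cv_xor[OF \<open>j - 8 < 8\<close> assms(2)]
    by (simp add: nested_cubes_def rflx_scale)
qed

lemma linear_rflx: "linear (rflx k)"
  by (rule linearI) (simp_all add: rflx_def vec_eq_iff algebra_simps)

lemma cv_sq: assumes "k < 8" shows "(cube_vertex k $ m)^2 = 1"
  using exhaust_3[of m] lt8[OF assms]
  by (elim disjE; simp add: cube_vertex_def)

lemma norm_rflx: assumes "k < 8" shows "norm (rflx k x) = norm x"
proof -
  have "(rflx k x) \<bullet> (rflx k x) = x \<bullet> x"
    using cv_sq[OF assms] by (simp add: rflx_def inner_vec_def power2_eq_square algebra_simps)
  then show ?thesis by (simp add: norm_eq_sqrt_inner)
qed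

definition SS :: "real \<Rightarrow> real \<Rightarrow> real \<Rightarrow> real \<Rightarrow> nat \<Rightarrow> real^3" where
  "SS t \<mu>1 \<mu>2 c i = (\<Sum>j\<in>{j. j < 16 \<and> j \<noteq> i}. (nested_masses \<mu>1 \<mu>2 j * (1 / norm (nested_cubes t j - nested_cubes t i) ^ 3 - c)) *\<^sub>R (nested_cubes t j - nested_cubes t i))"

lemma SS_xor: assumes "i < 16" "k < 8"
  shows "SS t \<mu>1 \<mu>2 c (i XOR k) = rflx k (SS t \<mu>1 \<mu>2 c i)"
proof -
  let ?p = "\<lambda>j. j XOR k"
  let ?g = "\<lambda>j. (nested_masses \<mu>1 \<mu>2 j * (1 / norm (nested_cubes t j - nested_cubes t (i XOR k)) ^ 3 - c)) *\<^sub>R (nested_cubes t j - nested_cubes t (i XOR k))"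
  have bij: "bij_betw ?p {j. j < 16 \<and> j \<noteq> i} {j. j < 16 \<and> j \<noteq> i XOR k}"
    apply (rule bij_betwI[where g = ?p])
    using xor_facts[OF _ assms(2)] xor_inv assms(1) by (auto simp: Pi_def) (metis xor_inv)
  have "SS t \<mu>1 \<mu>2 c (i XOR k) = sum ?g {j. j < 16 \<and> j \<noteq> i XOR k}" by (simp add: SS_def)
  also have "\<dots> = sum (?g \<circ> ?p) {j. j < 16 \<and> j \<noteq> i}"
    using sum.reindex_bij_betw[OF bij, of ?g] by simp
  also have "\<dots> = (\<Sum>j\<in>{j. j < 16 \<and> j \<noteq> i}. rflx k ((nested_masses \<mu>1 \<mu>2 j * (1 / norm (nested_cubes t j - nested_cubes t i) ^ 3 - c)) *\<^sub>R (nested_cubes t j - nested_cubes t i)))"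
  proof (rule sum.cong)
    fix j assume j: "j \<in> {j. j < 16 \<and> j \<noteq> i}"
    have d: "nested_cubes t (j XOR k) - nested_cubes t (i XOR k) = rflx k (nested_cubes t j - nested_cubes t i)"
      using nc_xor[OF _ assms(2)] j assms linear_diff[OF linear_rflx] by simp
    have m: "nested_masses \<mu>1 \<mu>2 (j XOR k) = nested_masses \<mu>1 \<mu>2 j"
      using xor_facts(3)[of j k] j assms by (simp add: nested_masses_def)
    show "(?g \<circ> ?p) j = rflx k ((nested_masses \<mu>1 \<mu>2 j * (1 / norm (nested_cubes t j - nested_cubes t i) ^ 3 - c)) *\<^sub>R (nested_cubes t j - nested_cubes t i))"
      using d m norm_rflx[OF assms(2)] by (simp add: rflx_scale)
  qed simp
  also have "\<dots> = rflx k (SS t \<mu>1 \<mu>2 c i)"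
    unfolding SS_def by (rule linear_sum[OF linear_rflx, symmetric])
  finally show ?thesis .
qed

lemma set0: "{j::nat. j < 16 \<and> j \<noteq> 0} = {1,2,3,4,5,6,7,8,9,10,11,12,13,14,15}"
  by (simp add: set_eq_iff) presburger

lemma norm3: "norm (x::real^3) = sqrt (x$1^2 + x$2^2 + x$3^2)"
  by (simp add: norm_vec_def L2_set_def sum_3)

lemma set8: "{j::nat. j < 16 \<and> j \<noteq> 8} = {0,1,2,3,4,5,6,7,9,10,11,12,13,14,15}"
  by (simp add: set_eq_iff) presburger

definition KK :: real where "KK = 1/4 + sqrt 2 / 8 + sqrt 3 / 36"
definition AA :: "real \<Rightarrow> real" where "AA t = 3*t^2 + 2*t + 3"
definition BB :: "real \<Rightarrow> real" where "BB t = 3*t^2 - 2*t + 3"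
definition F12 :: "real \<Rightarrow> real" where
  "F12 t = - 1/(3* sqrt 3*(1-t)^2) + (t-3)/(BB t * sqrt (BB t)) - (t+3)/(AA t * sqrt (AA t)) - 1/(3* sqrt 3*(1+t)^2)"
definition F21 :: "real \<Rightarrow> real" where
  "F21 t = 1/(3* sqrt 3*(1-t)^2) + (1-3*t)/(BB t * sqrt (BB t)) - (1+3*t)/(AA t * sqrt (AA t)) - 1/(3* sqrt 3*(1+t)^2)"

lemma AA_pos: "AA t > 0"
proof -
  have "AA t = 2*t^2 + (t+1)^2 + 2" by (simp add: AA_def power2_eq_square algebra_simps)
  also have "\<dots> > 0" by (simp add: add_nonneg_pos)
  finally show ?thesis .
qed
lemma BB_pos: "BB t > 0"
proof -
  have "BB t = 2*t^2 + (t-1)^2 + 2" by (simp add: BB_def power2_eq_square algebra_simps)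
  also have "\<dots> > 0" by (simp add: add_nonneg_pos)
  finally show ?thesis .
qed

lemma sqrt_cube: "0 \<le> x \<Longrightarrow> sqrt x ^ 3 = x * sqrt x"
  by (simp add: power3_eq_cube)

lemma sq_rules:
  assumes "0 < t" "t < 1"
  shows "sqrt (3*(t-1)^2) = sqrt 3 * (1-t)" "sqrt (3*(1-t)^2) = sqrt 3 * (1-t)"
    "sqrt (3*(-t-1)^2) = sqrt 3 * (1+t)" "sqrt (3*(-1-t)^2) = sqrt 3 * (1+t)"
    "2*(t-1)^2 + (-t-1)^2 = BB t" "2*(1-t)^2 + (-1-t)^2 = BB t"
    "2*(-t-1)^2 + (t-1)^2 = AA t" "2*(-1-t)^2 + (1-t)^2 = AA t"
    "sqrt (4*t^2) = 2*t" "sqrt (8*t^2) = 2* sqrt 2*t" "sqrt (12*t^2) = 2* sqrt 3*t"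
    "sqrt 8 = 2 * sqrt 2" "sqrt 12 = 2 * sqrt 3"
proof -
  have sm: "sqrt (a * x^2) = sqrt a * x" if "x \<ge> 0" for a x :: real
    using that by (simp add: real_sqrt_mult)
  show "sqrt (3*(t-1)^2) = sqrt 3 * (1-t)" using sm[of "1-t" 3] assms by (simp add: power2_commute)
  show "sqrt (3*(1-t)^2) = sqrt 3 * (1-t)" using sm[of "1-t" 3] assms by simp
  show "sqrt (3*(-t-1)^2) = sqrt 3 * (1+t)" using sm[of "1+t" 3] assms by (simp add: power2_eq_square algebra_simps)
  show "sqrt (3*(-1-t)^2) = sqrt 3 * (1+t)" using sm[of "1+t" 3] assms by (simp add: power2_eq_square algebra_simps)
  show "2*(t-1)^2 + (-t-1)^2 = BB t" "2*(1-t)^2 + (-1-t)^2 = BB t"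
    "2*(-t-1)^2 + (t-1)^2 = AA t" "2*(-1-t)^2 + (1-t)^2 = AA t"
    by (simp_all add: AA_def BB_def power2_eq_square algebra_simps)
  show "sqrt (4*t^2) = 2*t" using sm[of t 4] assms by simp
  show "sqrt 8 = 2 * sqrt 2" using sm[of 2 2] by simp
  show "sqrt 12 = 2 * sqrt 3" using sm[of 2 3] by simp
  show "sqrt (8*t^2) = 2* sqrt 2*t" using sm[of t 8] \<open>sqrt 8 = 2 * sqrt 2\<close> assms by simp
  show "sqrt (12*t^2) = 2* sqrt 3*t" using sm[of t 12] \<open>sqrt 12 = 2 * sqrt 3\<close> assms by simp
qed

lemma inv_sqrt0: "1 / (24 * sqrt 3) = sqrt 3 / 72" "1 / (16 * sqrt 2) = sqrt 2 / 32"
  by (simp_all add: field_simps)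
lemma inv_sqrt: "1 / (24 * sqrt 3) = sqrt 3 / 72" "1 / (16 * sqrt 2) = sqrt 2 / 32"
  "1 / (24 * sqrt 3 * x) = sqrt 3 / (72 * x)" "1 / (16 * sqrt 2 * x) = sqrt 2 / (32 * x)"
proof -
  show "1 / (24 * sqrt 3) = sqrt 3 / 72" "1 / (16 * sqrt 2) = sqrt 2 / 32" by (rule inv_sqrt0)+
  have "1 / (24 * sqrt 3 * x) = (1 / (24 * sqrt 3)) / x" by simp
  then show "1 / (24 * sqrt 3 * x) = sqrt 3 / (72 * x)" using inv_sqrt0(1) by simp
  have "1 / (16 * sqrt 2 * x) = (1 / (16 * sqrt 2)) / x" by simp
  then show "1 / (16 * sqrt 2 * x) = sqrt 2 / (32 * x)" using inv_sqrt0(2) by simp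
qed

definition PA :: "real \<Rightarrow> real" where "PA t = 1 / (AA t * sqrt (AA t))"
definition QB :: "real \<Rightarrow> real" where "QB t = 1 / (BB t * sqrt (BB t))"
definition UM :: "real \<Rightarrow> real" where "UM t = 1 / (3 * sqrt 3 * (1 - t) ^ 3)"
definition UP :: "real \<Rightarrow> real" where "UP t = 1 / (3 * sqrt 3 * (1 + t) ^ 3)"

lemma inv_sq: "x \<noteq> 0 \<Longrightarrow> 1 / (c * x^2) = x * (1 / (c * x^3))" for c x :: real
  by (simp add: power2_eq_square power3_eq_cube)

lemma F12_alt: assumes "t < 1" "0 < t" shows "F12 t = -(1-t)*UM t + (t-3)*QB t - (t+3)*PA t - (1+t)*UP t"
proof -
  have "1 - t \<noteq> 0" "1 + t \<noteq> 0" using assms by auto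
  then show ?thesis unfolding F12_def UM_def UP_def PA_def QB_def
    by (simp add: inv_sq[of "1-t"] inv_sq[of "1+t"] divide_simps) (simp add: algebra_simps)
qed
lemma F21_alt: assumes "t < 1" "0 < t" shows "F21 t = (1-t)*UM t + (1-3*t)*QB t - (1+3*t)*PA t - (1+t)*UP t"
proof -
  have "1 - t \<noteq> 0" "1 + t \<noteq> 0" using assms by auto
  then show ?thesis unfolding F21_def UM_def UP_def PA_def QB_def
    by (simp add: inv_sq[of "1-t"] inv_sq[of "1+t"] divide_simps)
qed

lemma S0: assumes "0 < t" "t < 1" and m: "m = 1 \<or> m = 2 \<or> m = 3"
  shows "SS t \<mu>1 \<mu>2 c 0 $ m = \<mu>1 * (- KK) + \<mu>2 * F12 t + 8 * c * (\<mu>1 + \<mu>2)"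
  using m
  unfolding SS_def set0
  apply (elim disjE)
  apply (simp_all add: sum_component norm3 nested_cubes_def cube_vertex_def nested_masses_def sq_rules[OF assms(1,2)])
  apply (simp_all add: power_mult_distrib sqrt_cube AA_pos[THEN less_imp_le] BB_pos[THEN less_imp_le] 
     KK_def F12_alt[OF assms(2,1)] inv_sqrt PA_def[symmetric] QB_def[symmetric] UM_def[symmetric] UP_def[symmetric])
  apply (simp_all add: algebra_simps)
  done

lemma t9: "t^9 = t * (t::real)^8"
proof -
  have "t^9 = t^(1+8)" by simp
  also have "\<dots> = t * t^8" by (simp only: power_add power_one_right)
  finally show ?thesis .
qed

lemma S8: assumes "0 < t" "t < 1" and m: "m = 1 \<or> m = 2 \<or> m = 3"
  shows "SS t \<mu>1 \<mu>2 c 8 $ m = \<mu>1 * F21 t - \<mu>2 * KK / t^2 + 8 * c * t * (\<mu>1 + \<mu>2)"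
  using m
  unfolding SS_def set8
  apply (elim disjE)
  apply (simp_all add: sum_component norm3 nested_cubes_def cube_vertex_def nested_masses_def sq_rules[OF assms(1,2)])
  apply (simp_all add: power_mult_distrib sqrt_cube AA_pos[THEN less_imp_le] BB_pos[THEN less_imp_le] 
     KK_def F21_alt[OF assms(2,1)] inv_sqrt PA_def[symmetric] QB_def[symmetric] UM_def[symmetric] UP_def[symmetric])
  using assms(1) apply (simp_all add: field_simps)
  apply (simp_all add: t9 mult_ac)
  done

lemma sqrt3_bounds: "1.732 \<le> sqrt 3" "sqrt 3 \<le> 1.7321"
proof -
  show "1.732 \<le> sqrt 3" by (rule real_le_rsqrt) (simp add: power2_eq_square)
  have "sqrt 3 \<le> sqrt (1.7321^2)" by (rule real_sqrt_le_mono) (simp add: power2_eq_square)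
  then show "sqrt 3 \<le> 1.7321" by simp
qed

lemma sqrt2_bounds: "1.4142 \<le> sqrt 2" "sqrt 2 \<le> 1.4143"
proof -
  show "1.4142 \<le> sqrt 2" by (rule real_le_rsqrt) (simp add: power2_eq_square)
  have "sqrt 2 \<le> sqrt (1.4143^2)" by (rule real_sqrt_le_mono) (simp add: power2_eq_square)
  then show "sqrt 2 \<le> 1.4143" by simp
qed

lemma u_bounds: "0.19244 \<le> 1 / (3 * sqrt 3)" "1 / (3 * sqrt 3) \<le> 0.19246"
  using sqrt3_bounds by (simp_all add: field_simps)

lemma KK_bounds: "0.4748 \<le> KK" "KK \<le> 0.47491"
  using sqrt3_bounds sqrt2_bounds unfolding KK_def by simp_all

lemma N2_core:
  fixes t x y u K :: real
  assumes t: "0 < t" "t < 1" and xy: "0 < x" "0 < y" "x^2 = 3*t^2 + 2*t + 3" "y^2 = 3*t^2 - 2*t + 3"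
    and u: "0.19244 \<le> u" and K: "0.4748 \<le> K"
  shows "u/(1-t)^2 - u/(1+t)^2 + (1-3*t)/(y^2*y) - (1+3*t)/(x^2*x) + t*K > 0"
proof -
  define X where "X = 1/x^3"
  define Y where "Y = 1/y^3"
  define a where "a = 1/x^2"
  define b where "b = 1/y^2"
  have tt: "t^2 < t" "t^2 \<ge> 0" using t mult_strict_left_mono[of t 1 t] by (simp_all add: power2_eq_square)
  have yb: "3*t^2 - 2*t + 3 = 3*(t-1/3)^2 + 8/3" by (simp add: power2_eq_square algebra_simps)
  have "(t-1/3)^2 \<ge> 0" by simp
  have X0: "X > 0" "Y > 0" using xy by (simp_all add: X_def Y_def)
  have tdef: "t = (x^2 - y^2)/4" using xy by simp
  have "y^2 \<le> x^2" using xy t by simp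
  then have yx: "y \<le> x" using power2_le_imp_le[of y x] xy(1) by simp
  have cube: "x^3 - y^3 - 3*t*(x+y) = (x-y)^3/4"
    unfolding tdef by (simp add: algebra_simps power2_eq_square power3_eq_cube divide_simps)
  have "(x-y)^3/4 \<ge> 0" using yx by simp
  then have c1: "x^3 - y^3 \<ge> 3*t*(x+y)" using cube by linarith
  have key: "Y - X \<ge> 3*t*(a*Y + b*X)"
  proof -
    have "Y - X = (x^3 - y^3) / (x^3*y^3)" using xy by (simp add: X_def Y_def field_simps)
    also have "\<dots> \<ge> 3*t*(x+y) / (x^3*y^3)" using c1 xy by (intro divide_right_mono) auto
    also have "3*t*(x+y) / (x^3*y^3) = 3*t*(a*Y + b*X)"
      using xy(1,2) by (simp add: X_def Y_def a_def b_def field_simps power2_eq_square power3_eq_cube)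
    finally show ?thesis .
  qed
  have ab: "0 \<le> 1 - a" "1 - a \<le> 7/8" "0 \<le> 1 - b" "1 - b \<le> 3/4"
  proof -
    have "x^2 \<ge> 3" "x^2 \<le> 8" "y^2 \<le> 4" "y^2 \<ge> 1" using xy t tt by linarith+
    moreover have "x^2 > 0" "y^2 > 0" using xy(1,2) by simp_all
    ultimately show "0 \<le> 1 - a" "1 - a \<le> 7/8" "0 \<le> 1 - b" "1 - b \<le> 3/4"
      by (simp_all add: a_def b_def divide_simps)
  qed
  have Ybd: "Y \<le> 0.2297"
  proof -
    have "y^2 \<ge> 8/3" using xy(4) yb \<open>(t-1/3)^2 \<ge> 0\<close> by linarith
    moreover have "(1.6329::real)^2 \<le> 8/3" by (simp add: power2_eq_square)
    ultimately have "y^2 \<ge> 1.6329^2" by linarith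
    then have "y \<ge> 1.6329" using power2_le_imp_le[of "1.6329" y] xy(2) by simp
    then have "y^3 \<ge> 1.6329^3" using power_mono[of "1.6329" y 3] by simp
    moreover have "(1.6329::real)^3 \<ge> 4.3538" by (simp add: power3_eq_cube)
    ultimately have "y^3 \<ge> 4.3538" by linarith
    then show ?thesis unfolding Y_def using xy(2) by (simp add: field_simps)
  qed
  have Xbd: "X \<le> 0.19248"
  proof -
    have "x^2 \<ge> 3" using xy(3) t tt by linarith
    moreover have "(1.732::real)^2 \<le> 3" by (simp add: power2_eq_square)
    ultimately have "x^2 \<ge> 1.732^2" by linarith
    then have "x \<ge> 1.732" using power2_le_imp_le[of "1.732" x] xy(1) by simp
    then have "x^3 \<ge> 1.732^3" using power_mono[of "1.732" x 3] by simp
    moreover have "(1.732::real)^3 \<ge> 5.1956" by (simp add: power3_eq_cube)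
    ultimately have "x^3 \<ge> 5.1956" by linarith
    then show ?thesis unfolding X_def using xy(1) by (simp add: field_simps)
  qed
  have uterm: "u/(1-t)^2 - u/(1+t)^2 \<ge> 4*u*t"
  proof -
    have e1: "(1-t)^2 * (1+t)^2 = (1-t^2)^2" by (simp add: power2_eq_square algebra_simps)
    have "0 < 1 - t^2" "1 - t^2 \<le> 1" using tt t by linarith+
    then have "(1-t^2)^2 \<le> 1^2" by (intro power_mono) auto
    then have d: "(1-t)^2 * (1+t)^2 \<le> 1" "(1-t)^2 * (1+t)^2 > 0" using e1 \<open>0 < 1 - t^2\<close> by simp_all
    have "u/(1-t)^2 - u/(1+t)^2 = 4*u*t / ((1-t)^2 * (1+t)^2)"
    proof -
      have n: "1 - t \<noteq> 0" "1 + t \<noteq> 0" using t by auto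
      show ?thesis using n by (simp add: field_simps) (simp add: power2_eq_square algebra_simps)
    qed
    also have "\<dots> \<ge> 4*u*t" using d t u
      by (simp add: le_divide_eq)
    finally show ?thesis .
  qed
  have e: "(1-3*t)/(y^2*y) - (1+3*t)/(x^2*x) = (Y - X) - 3*t*(Y + X)"
    using xy(1,2) by (simp add: X_def Y_def power3_eq_cube power2_eq_square field_simps)
  have m1: "Y*(1-a) \<le> 0.2297 * (7/8)" using Ybd ab X0 by (intro mult_mono) auto
  have m2: "X*(1-b) \<le> 0.19248 * (3/4)" using Xbd ab X0 by (intro mult_mono) auto
  have "4*u + K - 3*(Y*(1-a)) - 3*(X*(1-b)) > 0"
  proof -
    have "(4::real) * 0.19244 + 0.4748 - 3*(0.2297 * (7/8)) - 3*(0.19248 * (3/4)) > 0" by simp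
    then show ?thesis using m1 m2 u K by linarith
  qed
  then have "t * (4*u + K - 3*(Y*(1-a)) - 3*(X*(1-b))) > 0" using t by simp
  then show ?thesis using uterm e key by (simp add: algebra_simps)
qed

lemma N1_core:
  fixes t x y u K :: real
  assumes t: "0 < t" "t < 1" and xy: "0 < x" "0 < y" "x^2 = 3*t^2 + 2*t + 3" "y^2 = 3*t^2 - 2*t + 3"
    and u: "0.19244 \<le> u" and K: "K \<le> 0.47491"
  shows "- u/(1-t)^2 + (t-3)/(y^2*y) - (t+3)/(x^2*x) - u/(1+t)^2 + K < 0"
proof -
  have tt: "t^2 < t" "t^2 \<ge> 0" using t mult_strict_left_mono[of t 1 t] by (simp_all add: power2_eq_square)
  have "(1-t)^2 \<le> 1^2" using t by (intro power_mono) auto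
  then have a1: "u/(1-t)^2 \<ge> u" using t u by (simp add: le_divide_eq)
  have "(1+t)^2 \<le> 2^2" using t by (intro power_mono) auto
  moreover have "0 < 4 * (1+t)^2" using t by simp
  ultimately have a2: "u/(1+t)^2 \<ge> u/4" using divide_left_mono[of "(1+t)^2" 4 u] u by simp
  have "y^2 \<le> 2^2" using xy(4) t tt by simp
  then have "y \<le> 2" using power2_le_imp_le[of y 2] by simp
  then have "y^3 \<le> 2^3" using power_mono[of y 2 3] xy(2) by simp
  then have "y^2*y \<le> 8" by (simp add: power2_eq_square power3_eq_cube)
  moreover have "y^2*y > 0" using xy(2) by simp
  ultimately have "1/(y^2*y) \<ge> 1/8" by (simp add: frac_le)
  then have a3: "(t-3)/(y^2*y) \<le> -1/4"
  proof -
    have "(t-3)/(y^2*y) = (t-3) * (1/(y^2*y))" by simp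
    also have "\<dots> \<le> (-2) * (1/(y^2*y))" using t \<open>y^2*y > 0\<close> by (intro mult_right_mono) auto
    also have "\<dots> \<le> (-2) * (1/8)" using \<open>1/(y^2*y) \<ge> 1/8\<close> by linarith
    finally show ?thesis by simp
  qed
  have a4: "(t+3)/(x^2*x) \<ge> 0" using t xy(1) by simp
  have "-(u + u/4) - 1/4 + K < 0" using u K by simp
  then show ?thesis using a1 a2 a3 a4 by linarith
qed

lemma tsum_mono:
  fixes t t1 :: real
  assumes "0 < t" "t \<le> t1" "t1 \<le> 1"
  shows "t + 1/t^2 \<ge> t1 + 1/t1^2"
proof -
  have t1: "t1 > 0" using assms by linarith
  have "t^2 * t1^2 \<le> t"
  proof -
    have "t^2 \<le> t" using assms mult_left_mono[of t 1 t] by (simp add: power2_eq_square)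
    moreover have "t1^2 \<le> 1" using assms t1 by (simp add: power_le_one)
    moreover have "t^2 * t1^2 \<le> t^2 * 1" using \<open>t1^2 \<le> 1\<close> by (intro mult_left_mono) auto
    ultimately show ?thesis by simp
  qed
  then have "(t1 - t) * (t1 + t - t^2 * t1^2) \<ge> 0" using assms t1 by (intro mult_nonneg_nonneg) auto
  then have "t1^2 - t^2 \<ge> (t1 - t) * (t^2 * t1^2)" by (simp add: algebra_simps power2_eq_square)
  then have "(t1^2 - t^2) / (t^2 * t1^2) \<ge> t1 - t" using assms t1 by (simp add: le_divide_eq)
  moreover have "(t1^2 - t^2) / (t^2 * t1^2) = 1/t^2 - 1/t1^2" using assms t1 by (simp add: field_simps)
  ultimately show ?thesis by linarith
qed

lemma N3_core:
  fixes t x y u K t0 t1 r0 :: real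
  assumes t: "0 < t" "t < 1" and xy: "0 < x" "0 < y" "x^2 = 3*t^2 + 2*t + 3" "y^2 = 3*t^2 - 2*t + 3"
    and u: "0.19244 \<le> u" and K: "0.4748 \<le> K"
    and iv: "0 \<le> t0" "t0 \<le> t" "t \<le> t1" "t1 \<le> 1" "0 < r0" "r0^2 \<le> 3*t0^2 + 2*t0 + 3"
    and num: "0.4748*(t1 + 1/t1^2) + 2*0.19244*t0/(1-t0^2) - 6*t1*(0.2297 + 1/r0^3) > 0"
  shows "t*K + K/t^2 + u*(1/(1-t) - 1/(1+t)) + (t^2-6*t+1)/(y^2*y) - (t^2+6*t+1)/(x^2*x) > 0"
proof -
  define X where "X = 1/x^3"
  define Y where "Y = 1/y^3"
  have tt: "t^2 < t" "t^2 \<ge> 0" using t mult_strict_left_mono[of t 1 t] by (simp_all add: power2_eq_square)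
  have yb: "3*t^2 - 2*t + 3 = 3*(t-1/3)^2 + 8/3" by (simp add: power2_eq_square algebra_simps)
  have "(t-1/3)^2 \<ge> 0" by simp
  have X0: "X > 0" "Y > 0" using xy(1,2) by (simp_all add: X_def Y_def)
  have "y^2 \<le> x^2" using xy t by simp
  then have yx: "y \<le> x" using power2_le_imp_le[of y x] xy(1) by simp
  then have "y^3 \<le> x^3" using power_mono[of y x 3] xy(2) by simp
  then have XY: "X \<le> Y" unfolding X_def Y_def using xy(2) by (simp add: frac_le)
  have Ybd: "Y \<le> 0.2297"
  proof -
    have "y^2 \<ge> 8/3" using xy(4) yb \<open>(t-1/3)^2 \<ge> 0\<close> by linarith
    moreover have "(1.6329::real)^2 \<le> 8/3" by (simp add: power2_eq_square)
    ultimately have "y^2 \<ge> 1.6329^2" by linarith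
    then have "y \<ge> 1.6329" using power2_le_imp_le[of "1.6329" y] xy(2) by simp
    then have "y^3 \<ge> 1.6329^3" using power_mono[of "1.6329" y 3] by simp
    moreover have "(1.6329::real)^3 \<ge> 4.3538" by (simp add: power3_eq_cube)
    ultimately have "y^3 \<ge> 4.3538" by linarith
    then show ?thesis unfolding Y_def using xy(2) by (simp add: field_simps)
  qed
  have Xbd: "X \<le> 1/r0^3"
  proof -
    have "t0^2 \<le> t^2" using iv by (intro power_mono) auto
    then have "x^2 \<ge> r0^2" using xy(3) iv by linarith
    then have "x \<ge> r0" using power2_le_imp_le[of r0 x] xy(1) by simp
    then have "x^3 \<ge> r0^3" using power_mono[of r0 x 3] iv by simp
    then show ?thesis unfolding X_def using iv by (simp add: frac_le)
  qed
  have e: "(t^2-6*t+1)/(y^2*y) - (t^2+6*t+1)/(x^2*x) = (t^2+1)*(Y-X) - 6*t*(Y+X)"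
    using xy(1,2) by (simp add: X_def Y_def power3_eq_cube power2_eq_square field_simps)
  have "(t^2+1)*(Y-X) \<ge> 0" using XY by simp
  have "6*t*(Y+X) \<le> 6*t1*(0.2297 + 1/r0^3)"
    using Ybd Xbd X0 t iv by (intro mult_mono) auto
  have k1: "t*K + K/t^2 \<ge> 0.4748*(t1 + 1/t1^2)"
  proof -
    have "t + 1/t^2 \<ge> t1 + 1/t1^2" using tsum_mono iv t by simp
    moreover have "t1 + 1/t1^2 \<ge> 0" using iv t by simp
    ultimately have "K*(t + 1/t^2) \<ge> 0.4748*(t1 + 1/t1^2)" using K by (intro mult_mono) auto
    then show ?thesis by (simp add: algebra_simps)
  qed
  have u1: "u*(1/(1-t) - 1/(1+t)) \<ge> 2*0.19244*t0/(1-t0^2)"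
  proof -
    have n: "1 - t \<noteq> 0" "1 + t \<noteq> 0" using t by auto
    have "u*(1/(1-t) - 1/(1+t)) = u * (2*t/(1-t^2))"
      using n by (simp add: field_simps power2_eq_square)
    moreover have "2*t/(1-t^2) \<ge> 2*t0/(1-t0^2)"
    proof -
      have "t0^2 \<le> t^2" using iv by (intro power_mono) auto
      then have "1 - t^2 \<le> 1 - t0^2" "0 < 1 - t^2" using tt t by linarith+
      then show ?thesis using iv by (intro frac_le) auto
    qed
    moreover have "2*t0/(1-t0^2) \<ge> 0"
    proof -
      have "t0^2 \<le> t^2" using iv by (intro power_mono) auto
      then have "1 - t0^2 > 0" using tt t by linarith
      then show ?thesis using iv by simp
    qed
    ultimately have "u * (2*t/(1-t^2)) \<ge> 0.19244 * (2*t0/(1-t0^2))" using u by (intro mult_mono) auto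
    then show ?thesis using \<open>u*(1/(1-t) - 1/(1+t)) = u * (2*t/(1-t^2))\<close> by simp
  qed
  show ?thesis using e k1 u1 num \<open>(t^2+1)*(Y-X) \<ge> 0\<close> \<open>6*t*(Y+X) \<le> 6*t1*(0.2297 + 1/r0^3)\<close>
    by linarith
qed

definition aa :: "real \<Rightarrow> real" where "aa t = - t * KK - F21 t"
definition bb :: "real \<Rightarrow> real" where "bb t = t * F12 t + KK / t^2"

lemma pow32: "0 < x \<Longrightarrow> x powr (3/2) = x * sqrt x"
proof -
  assume x: "0 < x"
  have "x powr (3/2) = x powr (1 + 1/2)" by simp
  also have "\<dots> = x powr 1 * x powr (1/2)" by (rule powr_add)
  also have "\<dots> = x * sqrt x" using x by (simp add: powr_half_sqrt)
  finally show ?thesis .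
qed

lemma A_pow: "(3*t^2 + 2*t + 3) powr (3/2) = AA t * sqrt (AA t)"
  using pow32[OF AA_pos[of t]] by (simp add: AA_def)
lemma B_pow: "(3*t^2 - 2*t + 3) powr (3/2) = BB t * sqrt (BB t)"
  using pow32[OF BB_pos[of t]] by (simp add: BB_def)

lemma inv3s: "1/(3 * sqrt 3 * x) = sqrt 3 / (9 * x)"
proof -
  have a: "1/(3 * sqrt 3) = sqrt 3 / 9" by (simp add: field_simps)
  have "1/(3 * sqrt 3 * x) = (1/(3 * sqrt 3)) * (1/x)" by simp
  also have "\<dots> = sqrt 3 / (9 * x)" unfolding a by simp
  finally show ?thesis .
qed

lemma I1g:
  fixes t w3 w2 pa pb :: real
  assumes "t \<noteq> 0" "1 - t \<noteq> 0" "1 + t \<noteq> 0" "t - 1 \<noteq> 0" "pa \<noteq> 0" "pb \<noteq> 0"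
  shows "-((2*w3+9*w2+18)*t - 72*(t^2+6*t+1)/pa + 72*(t^2-6*t+1)/pb - 8*w3/(t+1) - 8*w3/(t-1) + (2*w3+9*w2+18)/t^2)
    = 72*((- t*(1/4 + w2/8 + w3/36) - (w3/(9*(1-t)^2) + (1-3*t)/pb - (1+3*t)/pa - w3/(9*(1+t)^2)))
        - (t*(- w3/(9*(1-t)^2) + (t-3)/pb - (t+3)/pa - w3/(9*(1+t)^2)) + (1/4 + w2/8 + w3/36)/t^2))"
proof -
  define K where "K = 1/4 + w2/8 + w3/36"
  define X1 where "X1 = w3/(9*(1-t)^2)"
  define X2 where "X2 = w3/(9*(1+t)^2)"
  have d1: "8*w3/(t-1) = 72*(t*X1 - X1)"
  proof -
    have "72*(t*X1 - X1) = 8*w3*(t-1)/(1-t)^2" unfolding X1_def by (simp add: diff_divide_distrib algebra_simps)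
    also have "\<dots> = 8*w3/(t-1)"
    proof -
      have "(1-t)^2 = (t-1)*(t-1)" by (simp add: power2_eq_square algebra_simps)
      then show ?thesis using assms(4) by simp
    qed
    finally show ?thesis by simp
  qed
  have d2: "8*w3/(t+1) = 72*(X2 + t*X2)"
  proof -
    have "72*(X2 + t*X2) = 8*w3*(1+t)/(1+t)^2" unfolding X2_def by (simp add: add_divide_distrib algebra_simps)
    also have "\<dots> = 8*w3/(t+1)"
    proof -
      have "(1+t)^2 = (1+t)*(1+t)" by (simp add: power2_eq_square)
      then show ?thesis using assms(3) by (simp add: add.commute)
    qed
    finally show ?thesis by simp
  qed
  have p: "72*(t^2+6*t+1)/pa = 72*((1+3*t)/pa + t*((t+3)/pa))"
    using assms by (simp add: field_simps) (simp add: algebra_simps power2_eq_square)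
  have q: "72*(t^2-6*t+1)/pb = 72*((1-3*t)/pb + t*((t-3)/pb))"
    using assms by (simp add: field_simps) (simp add: algebra_simps power2_eq_square)
  have k: "2*w3+9*w2+18 = 72*K" unfolding K_def by simp
  have ring: "\<And>X1 X2 Pa1 Pa2 Qb1 Qb2 K T. -(72*K*t - 72*(Pa1 + t*Pa2) + 72*(Qb1 + t*Qb2) - 72*(X2 + t*X2) - 72*(t*X1 - X1) + 72*K*T)
     = 72*((- t*K - (X1 + Qb1 - Pa1 - X2)) - (t*(- X1 + Qb2 - Pa2 - X2) + K*T))"
    by (simp add: algebra_simps)
  have "-((2*w3+9*w2+18)*t - 72*(t^2+6*t+1)/pa + 72*(t^2-6*t+1)/pb - 8*w3/(t+1) - 8*w3/(t-1) + (2*w3+9*w2+18)/t^2)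
    = -(72*K*t - 72*((1+3*t)/pa + t*((t+3)/pa)) + 72*((1-3*t)/pb + t*((t-3)/pb)) - 72*(X2 + t*X2) - 72*(t*X1 - X1) + 72*K*(1/t^2))"
    unfolding k p q d1 d2 by simp
  also have "\<dots> = 72*((- t*K - (X1 + (1-3*t)/pb - (1+3*t)/pa - X2)) - (t*(- X1 + (t-3)/pb - (t+3)/pa - X2) + K*(1/t^2)))"
    by (rule ring)
  finally show ?thesis unfolding K_def X1_def X2_def by simp
qed

lemma I1: assumes "0 < t" "t < 1" shows "gamma1 t = 72 * (aa t - bb t)"
proof -
  have n: "t \<noteq> 0" "1 - t \<noteq> 0" "1 + t \<noteq> 0" "t - 1 \<noteq> 0" using assms by auto
  have p: "AA t * sqrt (AA t) \<noteq> 0" "BB t * sqrt (BB t) \<noteq> 0" using AA_pos[of t] BB_pos[of t] by auto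
  have e1: "gamma1 t = -((2 * sqrt 3+9 * sqrt 2+18)*t - 72*(t^2+6*t+1)/(AA t * sqrt (AA t)) + 72*(t^2-6*t+1)/(BB t * sqrt (BB t))
     - 8 * sqrt 3/(t+1) - 8 * sqrt 3/(t-1) + (2 * sqrt 3+9 * sqrt 2+18)/t^2)"
    unfolding gamma1_def A_pow B_pow by simp
  have e2: "aa t - bb t = ((- t*(1/4 + sqrt 2/8 + sqrt 3/36) - (sqrt 3/(9*(1-t)^2) + (1-3*t)/(BB t * sqrt (BB t)) - (1+3*t)/(AA t * sqrt (AA t)) - sqrt 3/(9*(1+t)^2)))
        - (t*(- sqrt 3/(9*(1-t)^2) + (t-3)/(BB t * sqrt (BB t)) - (t+3)/(AA t * sqrt (AA t)) - sqrt 3/(9*(1+t)^2)) + (1/4 + sqrt 2/8 + sqrt 3/36)/t^2))"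
    unfolding aa_def bb_def F12_def F21_def KK_def by (simp add: inv3s)
  show ?thesis unfolding e1 e2 by (rule I1g[OF n p])
qed

lemma I2g:
  fixes t w3 w2 pa pb :: real
  assumes n: "t \<noteq> 0" "1 - t \<noteq> 0" "1 + t \<noteq> 0" "t - 1 \<noteq> 0" "pa \<noteq> 0" "pb \<noteq> 0"
    and w: "w3 * w3 = 3" "w2 * w2 = 2"
  shows "- 9 * (3*t + 1) * (t + 3) / (pa * pa)
      + 9 * (3*t - 1) * (t - 3) / (pb * pb)
      + (6 * w3 * w2 + 12 * w3 + 54 * w2 + 83) / (96 * t^2)
      - 4 * w3 / (pa * (t + 1))
      - 2 * w3 / (pb * (t + 1))
      - 2 * w3 / (pa * (t - 1))
      - 4 * w3 / (pb * (t - 1))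
      - 144 * t / (pa * pb)
      - 1 / (3 * (t + 1) ^ 4) + 1 / (3 * (t - 1) ^ 4)
    = 9 * ((1/4 + w2/8 + w3/36)^2 / t^2
        - (w3/(9*(1-t)^2) + (1-3*t)/pb - (1+3*t)/pa - w3/(9*(1+t)^2))
        * (- w3/(9*(1-t)^2) + (t-3)/pb - (t+3)/pa - w3/(9*(1+t)^2)))"
proof -
  define K where "K = 1/4 + w2/8 + w3/36"
  define X1 where "X1 = w3/(9*(1-t)^2)"
  define X2 where "X2 = w3/(9*(1+t)^2)"
  define P where "P = 1/pa"
  define Q where "Q = 1/pb"
  define E1 where "E1 = 1/(1-t)"
  define E2 where "E2 = 1/(1+t)"
  define T where "T = 1/t^2"
  have tp: "t + 1 = 1 + t" by simp
  have tm: "t - 1 = -(1 - t)" by simp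
  have g1: "- 9 * (3*t + 1) * (t + 3) / (pa * pa) = -9*((1+3*t)*(t+3))*(P*P)"
  proof -
    have e: "- 9 * (3*t + 1) * (t + 3) = -9*((1+3*t)*(t+3))" by (simp add: algebra_simps)
    show ?thesis unfolding P_def e by simp
  qed
  have g2: "9 * (3*t - 1) * (t - 3) / (pb * pb) = -9*((1-3*t)*(t-3))*(Q*Q)"
  proof -
    have e: "9 * (3*t - 1) * (t - 3) = -9*((1-3*t)*(t-3))" by (simp add: algebra_simps)
    show ?thesis unfolding Q_def e by simp
  qed
  have g3: "(6 * w3 * w2 + 12 * w3 + 54 * w2 + 83) / (96 * t^2) = 9*K^2*T"
  proof -
    have "9*K^2 = (6 * w3 * w2 + 12 * w3 + 54 * w2 + 83) / 96"
      unfolding K_def power2_eq_square using w by (simp add: algebra_simps)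
    then have "(6 * w3 * w2 + 12 * w3 + 54 * w2 + 83) = 96 * (9*K^2)" by simp
    then show ?thesis unfolding T_def using n(1) by simp
  qed
  have h4a: "4 * w3 / (pa * (t + 1)) = P*(w3*(4*E2))" unfolding P_def E2_def tp by simp
  have h4b: "2 * w3 / (pa * (t - 1)) = -(P*(w3*(2*E1)))"
  proof -
    have "2*w3/(pa*(t-1)) = -(2*w3/(pa*(1-t)))" by (metis minus_diff_eq mult_minus_right divide_minus_right)
    then show ?thesis by (simp add: P_def E1_def)
  qed
  have h5a: "2 * w3 / (pb * (t + 1)) = Q*(w3*(2*E2))" unfolding Q_def E2_def tp by simp
  have h5b: "4 * w3 / (pb * (t - 1)) = -(Q*(w3*(4*E1)))"
  proof -
    have "4*w3/(pb*(t-1)) = -(4*w3/(pb*(1-t)))" by (metis minus_diff_eq mult_minus_right divide_minus_right)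
    then show ?thesis by (simp add: Q_def E1_def)
  qed
  have g6: "144 * t / (pa * pb) = 9*(16*t)*(P*Q)" unfolding P_def Q_def by simp
  have h7a: "1 / (3 * (t + 1) ^ 4) = 9*X2^2"
  proof -
    have "X2^2 = w3^2/(81*(1+t)^4)" unfolding X2_def by (simp add: power_divide power_mult_distrib power2_eq_square[of "(1+t)^2", symmetric])
    also have "\<dots> = 3/(81*(1+t)^4)" using w by (simp add: power2_eq_square)
    finally show ?thesis unfolding tp by simp
  qed
  have h7b: "1 / (3 * (t - 1) ^ 4) = 9*X1^2"
  proof -
    have "X1^2 = w3^2/(81*(1-t)^4)" unfolding X1_def by (simp add: power_divide power_mult_distrib power2_eq_square[of "(1-t)^2", symmetric])
    also have "\<dots> = 3/(81*(1-t)^4)" using w by (simp add: power2_eq_square)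
    moreover have "(t - 1)^4 = (1-t)^4" using power_minus_even[of 4 "1-t"] by simp
    ultimately show ?thesis by simp
  qed
  have f2: "(X1-X2)*(t-3) - (X1+X2)*(1-3*t) = w3*(-4*E1 + 2*E2)/9"
  proof -
    have "(X1-X2)*(t-3) - (X1+X2)*(1-3*t) = X1*(4*t-4) + X2*(2*t+2)" by (simp add: algebra_simps)
    also have "X1*(4*t-4) = -4*w3*E1/9"
    proof -
      have "X1*(4*t-4) = -(4*w3*(1-t)/(9*(1-t)*(1-t)))" unfolding X1_def power2_eq_square by (simp add: algebra_simps minus_divide_left)
      also have "\<dots> = -4*w3*E1/9" unfolding E1_def using n(2) by simp
      finally show ?thesis .
    qed
    also have "X2*(2*t+2) = 2*w3*E2/9"
    proof -
      have "X2*(2*t+2) = 2*w3*(1+t)/(9*(1+t)*(1+t))" unfolding X2_def power2_eq_square by (simp add: algebra_simps)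
      also have "\<dots> = 2*w3*E2/9" unfolding E2_def using n(3) by simp
      finally show ?thesis .
    qed
    finally show ?thesis by (simp add: algebra_simps)
  qed
  have f3: "-(X1-X2)*(t+3) + (X1+X2)*(1+3*t) = w3*(-2*E1 + 4*E2)/9"
  proof -
    have "-(X1-X2)*(t+3) + (X1+X2)*(1+3*t) = X1*(2*t-2) + X2*(4*t+4)" by (simp add: algebra_simps)
    also have "X1*(2*t-2) = -2*w3*E1/9"
    proof -
      have "X1*(2*t-2) = -(2*w3*(1-t)/(9*(1-t)*(1-t)))" unfolding X1_def power2_eq_square by (simp add: algebra_simps minus_divide_left)
      also have "\<dots> = -2*w3*E1/9" unfolding E1_def using n(2) by simp
      finally show ?thesis .
    qed
    also have "X2*(4*t+4) = 4*w3*E2/9"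
    proof -
      have "X2*(4*t+4) = 4*w3*(1+t)/(9*(1+t)*(1+t))" unfolding X2_def power2_eq_square by (simp add: algebra_simps)
      also have "\<dots> = 4*w3*E2/9" unfolding E2_def using n(3) by simp
      finally show ?thesis .
    qed
    finally show ?thesis by (simp add: algebra_simps)
  qed
  have F21e: "w3/(9*(1-t)^2) + (1-3*t)/pb - (1+3*t)/pa - w3/(9*(1+t)^2) = X1 + (1-3*t)*Q - (1+3*t)*P - X2"
    unfolding X1_def X2_def P_def Q_def by simp
  have F12e: "- w3/(9*(1-t)^2) + (t-3)/pb - (t+3)/pa - w3/(9*(1+t)^2) = -X1 + (t-3)*Q - (t+3)*P - X2"
    unfolding X1_def X2_def P_def Q_def by simp
  have prod: "(X1 + (1-3*t)*Q - (1+3*t)*P - X2) * (-X1 + (t-3)*Q - (t+3)*P - X2)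
     = -(X1^2 - X2^2) + Q*((X1-X2)*(t-3) - (X1+X2)*(1-3*t)) + P*(-(X1-X2)*(t+3) + (X1+X2)*(1+3*t))
       + (1-3*t)*(t-3)*(Q*Q) + 16*t*(P*Q) + (1+3*t)*(t+3)*(P*P)"
    by (simp add: algebra_simps power2_eq_square)
  have K2: "(1/4 + w2/8 + w3/36)^2 / t^2 = K^2 * T" unfolding K_def T_def by simp
  show ?thesis
    unfolding g1 g2 g3 h4a h4b h5a h5b g6 h7a h7b F21e F12e prod f2 f3 K2
    by (simp add: algebra_simps) (simp add: field_simps)
qed

lemma A3: "(3*t^2 + 2*t + 3)^3 = (AA t * sqrt (AA t)) * (AA t * sqrt (AA t))"
proof -
  have "sqrt (AA t) * sqrt (AA t) = AA t" using AA_pos[of t] by simp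
  then have "(AA t * sqrt (AA t)) * (AA t * sqrt (AA t)) = AA t * AA t * AA t"
    by (metis mult.assoc mult.left_commute)
  moreover have "(3*t^2 + 2*t + 3)^3 = AA t * AA t * AA t" by (simp add: AA_def power3_eq_cube)
  ultimately show ?thesis by linarith
qed
lemma B3: "(3*t^2 - 2*t + 3)^3 = (BB t * sqrt (BB t)) * (BB t * sqrt (BB t))"
proof -
  have "sqrt (BB t) * sqrt (BB t) = BB t" using BB_pos[of t] by simp
  then have "(BB t * sqrt (BB t)) * (BB t * sqrt (BB t)) = BB t * BB t * BB t"
    by (metis mult.assoc mult.left_commute)
  moreover have "(3*t^2 - 2*t + 3)^3 = BB t * BB t * BB t" by (simp add: BB_def power3_eq_cube)
  ultimately show ?thesis by linarith
qed

lemma I2: assumes "0 < t" "t < 1" shows "gamma0 t = 9 * (KK^2 / t^2 - F21 t * F12 t)"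
proof -
  have n: "t \<noteq> 0" "1 - t \<noteq> 0" "1 + t \<noteq> 0" "t - 1 \<noteq> 0" using assms by auto
  have p: "AA t * sqrt (AA t) \<noteq> 0" "BB t * sqrt (BB t) \<noteq> 0" using AA_pos[of t] BB_pos[of t] by auto
  have w: "sqrt 3 * sqrt 3 = 3" "sqrt 2 * sqrt 2 = 2" by simp_all
  have e1: "gamma0 t = - 9 * (3*t + 1) * (t + 3) / ((AA t * sqrt (AA t)) * (AA t * sqrt (AA t)))
      + 9 * (3*t - 1) * (t - 3) / ((BB t * sqrt (BB t)) * (BB t * sqrt (BB t)))
      + (6 * sqrt 3 * sqrt 2 + 12 * sqrt 3 + 54 * sqrt 2 + 83) / (96 * t^2)
      - 4 * sqrt 3 / ((AA t * sqrt (AA t)) * (t + 1))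
      - 2 * sqrt 3 / ((BB t * sqrt (BB t)) * (t + 1))
      - 2 * sqrt 3 / ((AA t * sqrt (AA t)) * (t - 1))
      - 4 * sqrt 3 / ((BB t * sqrt (BB t)) * (t - 1))
      - 144 * t / ((AA t * sqrt (AA t)) * (BB t * sqrt (BB t)))
      - 1 / (3 * (t + 1) ^ 4) + 1 / (3 * (t - 1) ^ 4)"
    unfolding gamma0_def A_pow B_pow A3 B3 by simp
  have e2: "9 * (KK^2 / t^2 - F21 t * F12 t) = 9 * ((1/4 + sqrt 2/8 + sqrt 3/36)^2 / t^2
        - (sqrt 3/(9*(1-t)^2) + (1-3*t)/(BB t * sqrt (BB t)) - (1+3*t)/(AA t * sqrt (AA t)) - sqrt 3/(9*(1+t)^2))
        * (- sqrt 3/(9*(1-t)^2) + (t-3)/(BB t * sqrt (BB t)) - (t+3)/(AA t * sqrt (AA t)) - sqrt 3/(9*(1+t)^2)))"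
    unfolding F12_def F21_def KK_def by (simp add: inv3s)
  show ?thesis unfolding e1 e2 by (rule I2g[OF n p w])
qed

lemma I3g:
  fixes t ws pa pb c :: real
  assumes n: "1 - t \<noteq> 0" "1 + t \<noteq> 0"
  shows "24 * c - (ws * t + ws) / (3 * (t + 1) ^ 3) - 3 * (t + 3) / pa + 3 * (t - 3) / pb - (ws * t - ws) / (3 * (t - 1) ^ 3)
     = 3 * (8 * c + (- ws/(9*(1-t)^2) + (t-3)/pb - (t+3)/pa - ws/(9*(1+t)^2)))"
proof -
  have a: "(ws * t + ws) / (3 * (t + 1) ^ 3) = 3 * (ws/(9*(1+t)^2))"
  proof -
    have "(ws * t + ws) / (3 * (t + 1) ^ 3) = (ws * (1+t)) / (3 * (1+t)^2 * (1+t))"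
      by (simp add: algebra_simps power3_eq_cube power2_eq_square)
    also have "\<dots> = ws / (3 * (1+t)^2)" using n(2) by simp
    finally show ?thesis by simp
  qed
  have b: "(ws * t - ws) / (3 * (t - 1) ^ 3) = 3 * (ws/(9*(1-t)^2))"
  proof -
    have "(ws * t - ws) / (3 * (t - 1) ^ 3) = (ws * (t-1)) / (3 * (1-t)^2 * (t-1))"
      by (simp add: algebra_simps power3_eq_cube power2_eq_square)
    also have "\<dots> = ws / (3 * (1-t)^2)" using n(1) by simp
    finally show ?thesis by simp
  qed
  show ?thesis unfolding a b by (simp add: algebra_simps)
qed

lemma I3: assumes "0 < t" "t < 1" shows "mass_ratio t = - (8 * cc t + F12 t) / (8 * cc t - KK)"
proof -
  have n: "1 - t \<noteq> 0" "1 + t \<noteq> 0" using assms by auto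
  have num: "24 * cc t
        - (sqrt 3 * t + sqrt 3) / (3 * (t + 1) ^ 3)
        - 3 * (t + 3) / (3*t^2 + 2*t + 3) powr (3/2)
        + 3 * (t - 3) / (3*t^2 - 2*t + 3) powr (3/2)
        - (sqrt 3 * t - sqrt 3) / (3 * (t - 1) ^ 3) = 3 * (8 * cc t + F12 t)"
    unfolding A_pow B_pow using I3g[where ws="sqrt 3" and c="cc t" and pa="AA t * sqrt (AA t)" and pb="BB t * sqrt (BB t)", OF n]
    by (simp add: F12_def inv3s)
  have den: "24 * cc t - sqrt 3 / 12 - 3 * sqrt 2 / 8 - 3 / 4 = 3 * (8 * cc t - KK)"
    unfolding KK_def by simp
  have gen2: "\<And>X Y::real. - (3 * X) / (3 * Y) = - X / Y"
    by (case_tac "Y = 0") (simp_all add: field_simps)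
  show ?thesis unfolding mass_ratio_def num den gen2 ..
qed

lemma ratio:
  fixes K t F21 F12 :: real
  defines "a \<equiv> - t * K - F21" and "b \<equiv> t * F12 + K / t^2"
  assumes t: "t \<noteq> 0" and d: "a - b \<noteq> 0" and a: "a \<noteq> 0" and f: "F12 + K \<noteq> 0"
  shows "- (8 * (- (9 * (K^2 / t^2 - F21 * F12)) / (72 * (a - b))) + F12) / (8 * (- (9 * (K^2 / t^2 - F21 * F12)) / (72 * (a - b))) - K) = - b / a"
proof -
  define c8 where "c8 = - (K^2 / t^2 - F21 * F12) / (a - b)"
  have gen: "\<And>X Y::real. 8 * (- (9 * X) / (72 * Y)) = - X / Y"
    by (case_tac "Y = 0") (simp_all add: field_simps)
  have c: "8 * (- (9 * (K^2 / t^2 - F21 * F12)) / (72 * (a - b))) = c8" unfolding c8_def gen by simp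
  define B2 where "B2 = K / t^2"
  have K2: "K^2 / t^2 = K * B2" unfolding B2_def by (simp add: power2_eq_square)
  have n1: "c8 + F12 = (-(K*B2 - F21*F12) + F12*(a-b))/(a-b)" unfolding c8_def K2 using d by (simp add: field_simps)
  have n1': "-(K*B2 - F21*F12) + F12*(a-b) = -b*(F12+K)" unfolding a_def b_def B2_def[symmetric] by (simp add: algebra_simps)
  have n2: "c8 - K = (-(K*B2 - F21*F12) - K*(a-b))/(a-b)" unfolding c8_def K2 using d by (simp add: field_simps)
  have n2': "-(K*B2 - F21*F12) - K*(a-b) = -a*(F12+K)" unfolding a_def b_def B2_def[symmetric] by (simp add: algebra_simps)
  have "- (- b * (F12 + K) / (a - b)) / (- a * (F12 + K) / (a - b)) = - b / a"
    using d a f by (simp add: divide_simps)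
  then show ?thesis unfolding c n1 n2 n1' n2' .
qed

lemma xor8: assumes "8 \<le> i" "i < (16::nat)" shows "(8::nat) XOR (i - 8) = i"
proof -
  define k where "k = i - 8"
  have k: "i = k + 8" "k < 8" using assms unfolding k_def by auto
  have "(8::nat) XOR k = k + 8"
    using lt8[OF k(2)] by (elim disjE) simp_all
  then show ?thesis unfolding k_def[symmetric] using k(1) by simp
qed

lemma all_zero:
  "(\<forall>i<16. SS t \<mu>1 \<mu>2 c i = 0) \<longleftrightarrow> (SS t \<mu>1 \<mu>2 c 0 = 0 \<and> SS t \<mu>1 \<mu>2 c 8 = 0)"
proof
  assume "\<forall>i<16. SS t \<mu>1 \<mu>2 c i = 0"
  then show "SS t \<mu>1 \<mu>2 c 0 = 0 \<and> SS t \<mu>1 \<mu>2 c 8 = 0" by simp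
next
  assume h: "SS t \<mu>1 \<mu>2 c 0 = 0 \<and> SS t \<mu>1 \<mu>2 c 8 = 0"
  show "\<forall>i<16. SS t \<mu>1 \<mu>2 c i = 0"
  proof (intro allI impI)
    fix i :: nat assume i: "i < 16"
    show "SS t \<mu>1 \<mu>2 c i = 0"
    proof (cases "i < 8")
      case True
      have "SS t \<mu>1 \<mu>2 c ((0::nat) XOR i) = rflx i (SS t \<mu>1 \<mu>2 c 0)"
        using SS_xor[of 0 i] True by simp
      then show ?thesis using h linear_0[OF linear_rflx] by simp
    next
      case False
      then have k: "i - 8 < 8" "8 \<le> i" using i by auto
      have "SS t \<mu>1 \<mu>2 c ((8::nat) XOR (i - 8)) = rflx (i - 8) (SS t \<mu>1 \<mu>2 c 8)"
        using SS_xor[of 8 "i - 8"] k by simp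
      then show ?thesis using h linear_0[OF linear_rflx] xor8[OF k(2) i] by simp
    qed
  qed
qed

lemma SS0_iff: assumes "0 < t" "t < 1"
  shows "SS t \<mu>1 \<mu>2 c 0 = 0 \<longleftrightarrow> \<mu>1 * (- KK) + \<mu>2 * F12 t + 8 * c * (\<mu>1 + \<mu>2) = 0"
  using S0[OF assms, of 1] S0[OF assms, of 2] S0[OF assms, of 3]
  by (simp add: vec_eq_iff forall_3)

lemma SS8_iff: assumes "0 < t" "t < 1"
  shows "SS t \<mu>1 \<mu>2 c 8 = 0 \<longleftrightarrow> \<mu>1 * F21 t - \<mu>2 * KK / t^2 + 8 * c * t * (\<mu>1 + \<mu>2) = 0"
  using S8[OF assms, of 1] S8[OF assms, of 2] S8[OF assms, of 3]
  by (simp add: vec_eq_iff forall_3)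

lemma cv_inj: assumes "i < 8" "j < 8" "cube_vertex i = cube_vertex j" shows "i = j"
  using lt8[OF assms(1)] lt8[OF assms(2)] assms(3)
  by (elim disjE) (simp_all add: cube_vertex_def vec_eq_iff forall_3)

lemma cv_1: "\<bar>cube_vertex i $ 1\<bar> = 1"
  by (simp add: cube_vertex_def)

lemma distinct_nc: assumes "0 < t" "t < 1"
  shows "\<forall>i<16. \<forall>j<16. i \<noteq> j \<longrightarrow> nested_cubes t i \<noteq> nested_cubes t j"
proof (intro allI impI)
  fix i j :: nat assume ij: "i < 16" "j < 16" "i \<noteq> j"
  have mixed: "cube_vertex a \<noteq> t *\<^sub>R cube_vertex b" for a b
  proof
    assume "cube_vertex a = t *\<^sub>R cube_vertex b"
    then have "\<bar>cube_vertex a $ 1\<bar> = \<bar>t * cube_vertex b $ 1\<bar>" by simp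
    then have "1 = t" using cv_1[of a] cv_1[of b] assms by (simp add: abs_mult)
    then show False using assms by simp
  qed
  show "nested_cubes t i \<noteq> nested_cubes t j"
  proof (cases "i < 8"; cases "j < 8")
    assume "i < 8" "j < 8" then show ?thesis using cv_inj ij by (auto simp: nested_cubes_def)
  next
    assume "i < 8" "\<not> j < 8" then show ?thesis using mixed by (simp add: nested_cubes_def)
  next
    assume "\<not> i < 8" "j < 8" then show ?thesis using mixed by (simp add: nested_cubes_def) metis
  next
    assume a: "\<not> i < 8" "\<not> j < 8"
    show ?thesis
    proof
      assume "nested_cubes t i = nested_cubes t j"
      then have "t *\<^sub>R cube_vertex (i - 8) = t *\<^sub>R cube_vertex (j - 8)" using a by (simp add: nested_cubes_def)
      then have "cube_vertex (i - 8) = cube_vertex (j - 8)" using assms by simp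
      then have "i - 8 = j - 8" using cv_inj a ij by simp
      then show False using a ij by simp
    qed
  qed
qed

lemma cc_eq: assumes "0 < t" "t < 1"
  shows "cc t = - (9 * (KK^2 / t^2 - F21 t * F12 t)) / (72 * (aa t - bb t))"
  unfolding cc_def I1[OF assms] I2[OF assms] by simp

lemma mass_ratio_eq: assumes "0 < t" "t < 1" and d: "aa t - bb t \<noteq> 0" and a: "aa t \<noteq> 0" and f: "F12 t + KK \<noteq> 0"
  shows "mass_ratio t = - bb t / aa t"
  unfolding I3[OF assms(1,2)] cc_eq[OF assms(1,2)]
  using ratio[of t KK "F21 t" "F12 t"] d a f assms by (simp add: aa_def bb_def)

lemma xy_facts: "sqrt (AA t) > 0" "sqrt (BB t) > 0"
    "(sqrt (AA t))^2 = 3*t^2 + 2*t + 3" "(sqrt (BB t))^2 = 3*t^2 - 2*t + 3"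
    "(sqrt (AA t))^2 = AA t" "(sqrt (BB t))^2 = BB t"
  using AA_pos[of t] BB_pos[of t] by (simp_all add: AA_def BB_def)

lemma ineq_N1: assumes "0 < t" "t < 1" shows "F12 t + KK < 0"
proof -
  have c: "- (1 / (3 * sqrt 3))/(1-t)^2 + (t-3)/((sqrt (BB t))^2 * sqrt (BB t)) - (t+3)/((sqrt (AA t))^2 * sqrt (AA t)) - (1 / (3 * sqrt 3))/(1+t)^2 + KK < 0"
    by (rule N1_core[OF assms xy_facts(1-4) u_bounds(1) KK_bounds(2)])
  have "F12 t + KK = - (1 / (3 * sqrt 3))/(1-t)^2 + (t-3)/((sqrt (BB t))^2 * sqrt (BB t)) - (t+3)/((sqrt (AA t))^2 * sqrt (AA t)) - (1 / (3 * sqrt 3))/(1+t)^2 + KK"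
    unfolding xy_facts(5,6) F12_def by simp
  then show ?thesis using c by simp
qed

lemma ineq_N2: assumes "0 < t" "t < 1" shows "aa t < 0"
proof -
  have c: "(1 / (3 * sqrt 3))/(1-t)^2 - (1 / (3 * sqrt 3))/(1+t)^2 + (1-3*t)/((sqrt (BB t))^2 * sqrt (BB t)) - (1+3*t)/((sqrt (AA t))^2 * sqrt (AA t)) + t*KK > 0"
    by (rule N2_core[OF assms xy_facts(1-4) u_bounds(1) KK_bounds(1)])
  have "F21 t + t*KK = (1 / (3 * sqrt 3))/(1-t)^2 - (1 / (3 * sqrt 3))/(1+t)^2 + (1-3*t)/((sqrt (BB t))^2 * sqrt (BB t)) - (1+3*t)/((sqrt (AA t))^2 * sqrt (AA t)) + t*KK"
    unfolding xy_facts(5,6) F21_def by simp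
  then show ?thesis using c by (simp add: aa_def)
qed

lemma N3_all: assumes "0 < t" "t < 1"
  shows "t*KK + KK/t^2 + (1 / (3 * sqrt 3))*(1/(1-t) - 1/(1+t)) + (t^2-6*t+1)/((sqrt (BB t))^2 * sqrt (BB t)) - (t^2+6*t+1)/((sqrt (AA t))^2 * sqrt (AA t)) > 0"
proof -
  note base = N3_core[OF assms xy_facts(1-4) u_bounds(1) KK_bounds(1)]
  consider "t \<le> 1/2" | "1/2 \<le> t \<and> t \<le> 6/10" | "6/10 \<le> t \<and> t \<le> 7/10" | "7/10 \<le> t \<and> t \<le> 8/10"
    | "8/10 \<le> t \<and> t \<le> 9/10" | "9/10 \<le> t" by linarith
  then show ?thesis
  proof cases
    case 1 then show ?thesis using assms
      by (intro base[of 0 "1/2" "1.732"]) (simp_all add: power2_eq_square power3_eq_cube)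
  next
    case 2 then show ?thesis using assms
      by (intro base[of "1/2" "6/10" "2.179"]) (simp_all add: power2_eq_square power3_eq_cube)
  next
    case 3 then show ?thesis using assms
      by (intro base[of "6/10" "7/10" "2.2978"]) (simp_all add: power2_eq_square power3_eq_cube)
  next
    case 4 then show ?thesis using assms
      by (intro base[of "7/10" "8/10" "2.4228"]) (simp_all add: power2_eq_square power3_eq_cube)
  next
    case 5 then show ?thesis using assms
      by (intro base[of "8/10" "9/10" "2.5534"]) (simp_all add: power2_eq_square power3_eq_cube)
  next
    case 6 then show ?thesis using assms
      by (intro base[of "9/10" 1 "2.6888"]) (simp_all add: power2_eq_square power3_eq_cube)
  qed
qed

lemma ineq_N3: assumes "0 < t" "t < 1" shows "aa t - bb t < 0"
proof -
  define u where "u = 1 / (3 * sqrt 3)"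
  have u8: "8 * sqrt 3 = 72 * u" unfolding u_def by (simp add: field_simps)
  have k: "2 * sqrt 3 + 9 * sqrt 2 + 18 = 72 * KK" by (simp add: KK_def)
  have d1: "8 * sqrt 3 / (t + 1) = 72 * (u * (1/(1+t)))" unfolding u8 by (simp add: add.commute)
  have d2: "8 * sqrt 3 / (t - 1) = - (72 * (u * (1/(1-t))))"
  proof -
    have "8 * sqrt 3 / (t - 1) = - (8 * sqrt 3 / (1 - t))" by (metis minus_diff_eq divide_minus_right)
    then show ?thesis unfolding u8 by simp
  qed
  have g: "gamma1 t = - 72 * (t*KK + KK/t^2 + u*(1/(1-t) - 1/(1+t)) + (t^2-6*t+1)/((sqrt (BB t))^2 * sqrt (BB t)) - (t^2+6*t+1)/((sqrt (AA t))^2 * sqrt (AA t)))"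
    unfolding gamma1_def A_pow B_pow xy_facts(5,6) k d1 d2 by (simp add: algebra_simps) (simp add: add_divide_distrib[symmetric])
  have hpos: "t*KK + KK/t^2 + u*(1/(1-t) - 1/(1+t)) + (t^2-6*t+1)/((sqrt (BB t))^2 * sqrt (BB t)) - (t^2+6*t+1)/((sqrt (AA t))^2 * sqrt (AA t)) > 0"
    using N3_all[OF assms] unfolding u_def .
  have "gamma1 t < 0" unfolding g by (rule mult_neg_pos[OF _ hpos]) simp
  then show ?thesis using I1[OF assms] by simp
qed

theorem theorem10:
  fixes t \<mu>1 \<mu>2 :: real
  assumes "0 < t" and "t < 1" and "\<mu>2 \<noteq> 0"
  shows "central_configuration 16 (nested_cubes t) (nested_masses \<mu>1 \<mu>2)
           \<longleftrightarrow> \<mu>1 / \<mu>2 = mass_ratio t"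
proof -
  have t: "0 < t" "t < 1" using assms by auto
  have a: "aa t < 0" using ineq_N2[OF t] .
  have d: "aa t - bb t < 0" using ineq_N3[OF t] .
  have f: "F12 t + KK < 0" using ineq_N1[OF t] .
  have mr: "mass_ratio t = - bb t / aa t" using mass_ratio_eq[OF t] a d f by simp
  define E0 where "E0 c = \<mu>1 * (- KK) + \<mu>2 * F12 t + 8 * c * (\<mu>1 + \<mu>2)" for c
  define E8 where "E8 c = \<mu>1 * F21 t - \<mu>2 * KK / t^2 + 8 * c * t * (\<mu>1 + \<mu>2)" for c
  have comb: "t * E0 c - E8 c = \<mu>1 * aa t + \<mu>2 * bb t" for c
    unfolding E0_def E8_def aa_def bb_def by (simp add: algebra_simps)
  have cc_iff: "central_configuration 16 (nested_cubes t) (nested_masses \<mu>1 \<mu>2) \<longleftrightarrow> (\<exists>c. E0 c = 0 \<and> E8 c = 0)"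
  proof -
    have "central_configuration 16 (nested_cubes t) (nested_masses \<mu>1 \<mu>2) \<longleftrightarrow> (\<exists>c. \<forall>i<16. SS t \<mu>1 \<mu>2 c i = 0)"
      unfolding central_configuration_def SS_def using distinct_nc[OF t] by simp
    also have "\<dots> \<longleftrightarrow> (\<exists>c. E0 c = 0 \<and> E8 c = 0)"
      unfolding all_zero SS0_iff[OF t] SS8_iff[OF t] E0_def E8_def by simp
    finally show ?thesis .
  qed
  have "(\<exists>c. E0 c = 0 \<and> E8 c = 0) \<longleftrightarrow> \<mu>1 / \<mu>2 = - bb t / aa t"
  proof
    assume "\<exists>c. E0 c = 0 \<and> E8 c = 0"
    then obtain c where "E0 c = 0" "E8 c = 0" by blast
    then have "\<mu>1 * aa t + \<mu>2 * bb t = 0" using comb[of c] by simp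
    then show "\<mu>1 / \<mu>2 = - bb t / aa t" using a assms(3) by (simp add: field_simps)
  next
    assume r: "\<mu>1 / \<mu>2 = - bb t / aa t"
    then have m1: "\<mu>1 = - bb t * \<mu>2 / aa t" using assms(3) by (simp add: field_simps)
    then have lin: "\<mu>1 * aa t + \<mu>2 * bb t = 0" using a by simp
    have "\<mu>1 + \<mu>2 = \<mu>2 * (aa t - bb t) / aa t" unfolding m1 using a by (simp add: field_simps)
    then have s: "\<mu>1 + \<mu>2 \<noteq> 0" using a d assms(3) by simp
    define c where "c = (\<mu>1 * KK - \<mu>2 * F12 t) / (8 * (\<mu>1 + \<mu>2))"
    have e0: "E0 c = 0" unfolding E0_def c_def using s by (simp add: field_simps)
    have "E8 c = 0" using comb[of c] e0 lin by simp
    then show "\<exists>c. E0 c = 0 \<and> E8 c = 0" using e0 by blast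
  qed
  then show ?thesis unfolding cc_iff mr .
qed

end
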